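(* Let $X$ be a standard one-dimensional Brownian motion starting at $0$, $p$ the atomic proposition with $X(\omega),t\models_n p$ iff $X_t(\omega)\geq1$, and $\phi_1:=\Box_{(1,2)}(\Diamond_{(1,4)}p\wedge\lnot\Diamond_{(1,3)}p)$. Let $n\geq2$, $\tau^{(n)}_p(\omega):=\inf\{t\in\mathbb{N}/n : X(\omega),t\models_n p\}$, and suppose $\tau^{(n)}_p(\omega)\geq6$. Then $X(\omega),t\not\models_n\phi_1$ for $t=0,1/n,\dots,\tau^{(n)}_p(\omega)-5-1/n$; $X(\omega),t\models_n\phi_1$ for $t=\tau^{(n)}_p(\omega)-5,\ \tau^{(n)}_p(\omega)-5+1/n$; $X(\omega),t\not\models_n\phi_1$ for $t=\tau^{(n)}_p(\omega)-5+2/n,\dots,\tau^{(n)}_p(\omega)-2-2/n$.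
   Context: $\mathbb{N}/n:=\{k/n : k\in\mathbb{N}\}$. Discrete semantics at $t\in\mathbb{N}/n$: $\lnot,\wedge$ classical; $X(\omega),t\models_n\Diamond_I\phi$ iff $\exists s\in I\cap\mathbb{N}/n$ with $X(\omega),t+s\models_n\phi$; $X(\omega),t\models_n\Box_I\phi$ iff $\forall s\in I\cap\mathbb{N}/n$, $X(\omega),t+s\models_n\phi$. *)

theory Defs
  imports "HOL-Probability.Probability"
begin

definition std_brownian_motion :: "'a measure \<Rightarrow> (real \<Rightarrow> 'a \<Rightarrow> real) \<Rightarrow> bool" where
  "std_brownian_motion M X \<longleftrightarrow>
     prob_space M \<and>
     (\<forall>t\<ge>0. X t \<in> borel_measurable M) \<and>
     (\<forall>\<omega>\<in>space M. X 0 \<omega> = 0 \<and> continuous_on {0..} (\<lambda>t. X t \<omega>)) \<and>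
     (\<forall>s t. 0 \<le> s \<and> s < t \<longrightarrow>
        distributed M lborel (\<lambda>\<omega>. X t \<omega> - X s \<omega>)
          (\<lambda>x. ennreal (normal_density 0 (sqrt (t - s)) x))) \<and>
     (\<forall>(ts::nat \<Rightarrow> real) k. (\<forall>i<k. 0 \<le> ts i \<and> ts i < ts (Suc i)) \<longrightarrow>
        prob_space.indep_vars M (\<lambda>_. borel) (\<lambda>i \<omega>. X (ts (Suc i)) \<omega> - X (ts i) \<omega>) {..<k})"

definition grid :: "nat \<Rightarrow> real set" where
  "grid n = {real k / real n | k. True}"

datatype mtl = Atom "real \<Rightarrow> bool" | Neg mtl | Conj mtl mtl
  | Dia "real set" mtl | Box "real set" mtl

fun sat :: "nat \<Rightarrow> (real \<Rightarrow> real) \<Rightarrow> real \<Rightarrow> mtl \<Rightarrow> bool" where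
  "sat n x t (Atom a) = a (x t)"
| "sat n x t (Neg \<phi>) = (\<not> sat n x t \<phi>)"
| "sat n x t (Conj \<phi> \<psi>) = (sat n x t \<phi> \<and> sat n x t \<psi>)"
| "sat n x t (Dia I \<phi>) = (\<exists>s \<in> I \<inter> grid n. sat n x (t + s) \<phi>)"
| "sat n x t (Box I \<phi>) = (\<forall>s \<in> I \<inter> grid n. sat n x (t + s) \<phi>)"

definition p_atom :: mtl where
  "p_atom = Atom (\<lambda>v. v \<ge> 1)"

definition phi1 :: mtl where
  "phi1 = Box {1<..<2} (Conj (Dia {1<..<4} p_atom) (Neg (Dia {1<..<3} p_atom)))"

definition tau_p :: "nat \<Rightarrow> (real \<Rightarrow> real) \<Rightarrow> real" where
  "tau_p n x = Inf {t \<in> grid n. sat n x t p_atom}"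

end

theory Submission
  imports Defs
begin



lemma grid_diff: assumes "a \<in> grid n" "b \<in> grid n" "b \<le> a" "n > 0" shows "a - b \<in> grid n"
proof -
  obtain i j :: nat where "a = i / n" "b = j / n" using assms unfolding grid_def by auto
  with assms have "j \<le> i" by (simp add: divide_le_cancel)
  then have "a - b = real (i - j) / n" using \<open>a = _\<close> \<open>b = _\<close> by (simp add: of_nat_diff diff_divide_distrib)
  then show ?thesis unfolding grid_def by blast
qed

lemma grid_add: assumes "a \<in> grid n" "b \<in> grid n" shows "a + b \<in> grid n"
proof -
  obtain i j :: nat where "a = i / n" "b = j / n" using assms unfolding grid_def by auto
  then have "a + b = real (i + j) / n" by (simp add: add_divide_distrib)
  then show ?thesis unfolding grid_def by blast
qed

lemma grid_nat: "real k / real n \<in> grid n" unfolding grid_def by blast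

lemma grid_lt: assumes "a \<in> grid n" "b \<in> grid n" "a < b" "n > 0" shows "a \<le> b - 1 / n"
proof -
  obtain i j :: nat where "a = i / n" "b = j / n" using assms unfolding grid_def by auto
  with assms have "i < j" by (simp add: divide_less_cancel)
  then have "real i \<le> real j - 1" by simp
  then have "real i / n \<le> (real j - 1) / n" by (simp add: divide_right_mono)
  then show ?thesis using \<open>a = _\<close> \<open>b = _\<close> by (simp add: diff_divide_distrib)
qed

lemma grid_int: assumes "n > 0" shows "real m \<in> grid n"
proof -
  have "real m = real (m * n) / n" using assms by simp
  then show ?thesis using grid_nat by metis
qed

lemma grid_nn: "t \<in> grid n \<Longrightarrow> t \<ge> 0" unfolding grid_def by auto

lemma tau_props:
  assumes "n > 0" "{t \<in> grid n. sat n x t p_atom} \<noteq> {}"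
  shows "tau_p n x \<in> grid n" "x (tau_p n x) \<ge> 1" "\<And>t. t \<in> grid n \<Longrightarrow> t < tau_p n x \<Longrightarrow> x t < 1"
proof -
  let ?K = "{k::nat. x (real k / n) \<ge> 1}"
  have "?K \<noteq> {}" using assms(2) unfolding grid_def p_atom_def by auto
  define k0 where "k0 = (LEAST k. k \<in> ?K)"
  have k0: "k0 \<in> ?K" using \<open>?K \<noteq> {}\<close> unfolding k0_def by (metis LeastI ex_in_conv)
  have min: "k0 \<le> k" if "k \<in> ?K" for k using that unfolding k0_def by (simp add: Least_le)
  have "tau_p n x = real k0 / n"
    unfolding tau_p_def
  proof (rule cInf_eq_minimum)
    show "real k0 / real n \<in> {t \<in> grid n. sat n x t p_atom}" using k0 grid_nat by (auto simp: p_atom_def)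
    fix t assume "t \<in> {t \<in> grid n. sat n x t p_atom}"
    then obtain k where "t = real k / n" "k \<in> ?K" unfolding grid_def p_atom_def by auto
    then show "real k0 / real n \<le> t" using min[of k] by (simp add: divide_right_mono)
  qed
  then show "tau_p n x \<in> grid n" "x (tau_p n x) \<ge> 1" using k0 grid_nat by auto
  fix t assume "t \<in> grid n" "t < tau_p n x"
  then obtain k where "t = real k / n" unfolding grid_def by auto
  with \<open>t < _\<close> \<open>tau_p n x = _\<close> assms(1) have "k < k0" by (simp add: divide_less_cancel)
  then show "x t < 1" using min[of k] \<open>t = _\<close> by force
qed

lemma main:
  fixes x :: "real \<Rightarrow> real"
  assumes "n \<ge> 2"
    and "{t \<in> grid n. sat n x t p_atom} \<noteq> {}"
    and "tau_p n x \<ge> 6"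
  shows "(\<forall>t \<in> grid n. t \<le> tau_p n x - 5 - 1 / real n \<longrightarrow>
            \<not> sat n x t phi1)
       \<and> sat n x (tau_p n x - 5) phi1
       \<and> sat n x (tau_p n x - 5 + 1 / real n) phi1
       \<and> (\<forall>t \<in> grid n. tau_p n x - 5 + 2 / real n \<le> t
            \<and> t \<le> tau_p n x - 2 - 2 / real n \<longrightarrow>
            \<not> sat n x t phi1)"
proof -
  have n0: "n > 0" using assms by simp
  have nr: "real n \<ge> 2" using assms by simp
  have inv: "1 / real n \<le> 1/2" using nr by (simp add: field_simps)
  have invp: "1 / real n > 0" using n0 by simp
  define T where "T = tau_p n x"
  have TG: "T \<in> grid n" and Tx: "x T \<ge> 1" and Tmin: "\<And>t. t \<in> grid n \<Longrightarrow> t < T \<Longrightarrow> x t < 1"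
    using tau_props[OF n0 assms(2)] unfolding T_def by auto
  have g1n: "1 / real n \<in> grid n" using grid_nat[of 1 n] by simp
  have g1: "1 + 1 / real n \<in> grid n" using grid_add[OF grid_int[OF n0, of 1] g1n] by simp
  have g2: "2 - 1 / real n \<in> grid n" using grid_diff[OF grid_int[OF n0, of 2] g1n] inv n0 by simp
  have g5: "T - 5 \<in> grid n" using grid_diff[OF TG grid_int[OF n0, of 5]] assms(3) n0 unfolding T_def by simp
  have g5': "T - 5 + 1 / real n \<in> grid n" using grid_add[OF g5 g1n] .
  have bad: "\<not> sat n x t phi1" if "t \<in> grid n" "s \<in> grid n" "1 < s" "s < 2" "1 < T - t - s" "T - t - s < 3" for t s
  proof -
    have "T - t - s \<in> grid n"
      using grid_diff[OF TG grid_add[OF that(1) that(2)]] that n0 by (simp add: diff_diff_eq)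
    moreover have "t + s + (T - t - s) = T" by simp
    ultimately have "\<exists>u\<in>{1<..<3} \<inter> grid n. 1 \<le> x (t + s + u)" using that Tx
      by (intro bexI[of _ "T - t - s"]) auto
    moreover have "s \<in> {1<..<2} \<inter> grid n" using that by auto
    ultimately show ?thesis unfolding phi1_def p_atom_def by auto
  qed
  have good: "sat n x t phi1" if tg: "t \<in> grid n" and lo: "T - 5 \<le> t" and hi: "t \<le> T - 5 + 1/real n" for t
    unfolding phi1_def p_atom_def sat.simps
  proof (intro ballI conjI)
    fix s assume s: "s \<in> {1<..<2} \<inter> grid n"
    have sle: "s \<le> 2 - 1/real n" using grid_lt[OF _ grid_int[OF n0, of 2], of s] s n0 by auto
    have "t + s \<le> T" using s hi inv by auto
    then have "T - (t + s) \<in> grid n" using grid_diff[OF TG grid_add[OF tg], of s] s n0 by auto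
    moreover have "1 < T - (t+s)" "T - (t+s) < 4" using s sle lo hi by auto
    ultimately show "\<exists>u\<in>{1<..<4} \<inter> grid n. 1 \<le> x (t + s + u)" using Tx
      by (intro bexI[of _ "T - (t+s)"]) auto
    show "\<not> (\<exists>u\<in>{1<..<3} \<inter> grid n. 1 \<le> x (t + s + u))"
    proof
      assume "\<exists>u\<in>{1<..<3} \<inter> grid n. 1 \<le> x (t + s + u)"
      then obtain u where u: "u \<in> {1<..<3} \<inter> grid n" "1 \<le> x (t + s + u)" by blast
      have ule: "u \<le> 3 - 1/real n" using grid_lt[OF _ grid_int[OF n0, of 3], of u] u n0 by auto
      have "t + s + u \<in> grid n" using grid_add[OF grid_add[OF tg] ] s u by auto
      moreover have "t + s + u < T" using sle ule hi invp by linarith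
      ultimately show False using Tmin u by fastforce
    qed
  qed
  show ?thesis unfolding T_def[symmetric]
  proof (intro conjI ballI impI)
    show "sat n x (T - 5) phi1" using good g5 invp by auto
    show "sat n x (T - 5 + 1/real n) phi1" using good g5' invp by auto
  next
    fix t assume tg: "t \<in> grid n" and th: "t \<le> T - 5 - 1 / real n"
    show "\<not> sat n x t phi1"
    proof
      assume H: "sat n x t phi1"
      have s1: "1 + 1/real n \<in> {1<..<2} \<inter> grid n" using g1 invp inv by auto
      from H s1 have "\<exists>u\<in>{1<..<4} \<inter> grid n. 1 \<le> x (t + (1 + 1 / real n) + u)"
        unfolding phi1_def p_atom_def sat.simps by blast
      then obtain u where u: "u \<in> {1<..<4} \<inter> grid n" "1 \<le> x (t + (1 + 1 / real n) + u)" by blast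
      have "t + (1 + 1 / real n) + u \<in> grid n" using grid_add[OF grid_add[OF tg g1]] u by auto
      moreover have "t + (1 + 1 / real n) + u < T" using u th by auto
      ultimately show False using Tmin u by fastforce
    qed
  next
    fix t assume tg: "t \<in> grid n" and th: "T - 5 + 2 / real n \<le> t \<and> t \<le> T - 2 - 2 / real n"
    show "\<not> sat n x t phi1"
    proof (cases "t \<le> T - 4 - 1/real n")
      case True
      show ?thesis using bad[OF tg g2] True th invp inv by auto
    next
      case False
      show ?thesis using bad[OF tg g1] False th invp inv by auto
    qed
  qed
qed


theorem lemma5p4:
  fixes M :: "'a measure" and X :: "real \<Rightarrow> 'a \<Rightarrow> real" and n :: nat and \<omega> :: 'a
  assumes "std_brownian_motion M X"
    and "\<omega> \<in> space M"
    and "n \<ge> 2"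
    and "{t \<in> grid n. sat n (\<lambda>s. X s \<omega>) t p_atom} \<noteq> {}"
    and "tau_p n (\<lambda>s. X s \<omega>) \<ge> 6"
  shows "(\<forall>t \<in> grid n. t \<le> tau_p n (\<lambda>s. X s \<omega>) - 5 - 1 / real n \<longrightarrow>
            \<not> sat n (\<lambda>s. X s \<omega>) t phi1)
       \<and> sat n (\<lambda>s. X s \<omega>) (tau_p n (\<lambda>s. X s \<omega>) - 5) phi1
       \<and> sat n (\<lambda>s. X s \<omega>) (tau_p n (\<lambda>s. X s \<omega>) - 5 + 1 / real n) phi1
       \<and> (\<forall>t \<in> grid n. tau_p n (\<lambda>s. X s \<omega>) - 5 + 2 / real n \<le> t
            \<and> t \<le> tau_p n (\<lambda>s. X s \<omega>) - 2 - 2 / real n \<longrightarrow>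
            \<not> sat n (\<lambda>s. X s \<omega>) t phi1)"
  using main[OF assms(3) assms(4) assms(5)] .

end
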